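(* Let $m,n$ be positive integers with $n\ge 2$, let $\Pi$ be a regular $(nm+2)$-gon, and let $\Gamma^m_{A_{n-1}}$ and $\tau_m$ be the quiver of $m$-diagonals of $\Pi$ and the rotation map described in the context. Then $(\Gamma^m_{A_{n-1}},\tau_m)$ is a stable translation quiver.
   Context: The vertices of $\Pi$ are labelled $1,\dots,nm+2$ clockwise, and vertex labels are taken modulo $nm+2$. A diagonal with endpoints $i,j$ is written $(i,j)=(j,i)$. An $m$-diagonal is a diagonal of $\Pi$ that divides $\Pi$ into an $(mj+2)$-gon and an $(m(n-j)+2)$-gon for some integer $1\le j\le n-1$. The quiver $\Gamma^m_{A_{n-1}}$ has as vertices the $m$-diagonals of $\Pi$. There is an arrow $D\to D'$ (and at most one) exactly when $D$ and $D'$ share an endpoint $i$, with other endpoints $j$ and $j'$ respectively, such that $D$, $D'$ and the boundary arc from $j$ to $j'$ not containing $i$ bound an $(m+2)$-gon, and $D$ is rotated onto the line through $D'$ by a clockwise rotation about $i$. Equivalently, $D=(i,j)$ and $D'=(i,j+m)$ are both $m$-diagonals. The map $\tau_m$ sends an $m$-diagonal to its image under the anticlockwise rotation of $\Pi$ about its centre through $2m\pi/(nm+2)$, that is $(i,j)\mapsto(i-m,j-m)$. A translation quiver is a pair $(\Gamma,\tau)$ with the following properties: $\Gamma$ is a locally finite quiver with vertex set $\Gamma_0$; $\tau:\Gamma_0'\to\Gamma_0$ is an injective map defined on a subset $\Gamma_0'\subseteq\Gamma_0$; and for all $X\in\Gamma_0$ and $Y\in\Gamma_0'$ the number of arrows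 $X\to Y$ equals the number of arrows $\tau(Y)\to X$. The vertices not in $\Gamma_0'$ are called projective. The translation quiver is stable if $\Gamma_0'=\Gamma_0$ and $\tau$ is bijective. *)

theory Defs
  imports Main
begin

text \<open>A quiver is given by a vertex set V and an arrow-multiplicity function
  arr (arr x y = number of arrows x -> y); arrows only join vertices of V.
  tau is defined on the subset V' of V.\<close>

definition locally_finite_quiver :: "'v set \<Rightarrow> ('v \<Rightarrow> 'v \<Rightarrow> nat) \<Rightarrow> bool" where
  "locally_finite_quiver V arr \<longleftrightarrow>
     (\<forall>x y. arr x y > 0 \<longrightarrow> x \<in> V \<and> y \<in> V) \<and>
     (\<forall>x\<in>V. finite {y. arr x y > 0} \<and> finite {y. arr y x > 0})"

definition translation_quiver ::
  "'v set \<Rightarrow> ('v \<Rightarrow> 'v \<Rightarrow> nat) \<Rightarrow> 'v set \<Rightarrow> ('v \<Rightarrow> 'v) \<Rightarrow> bool" where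
  "translation_quiver V arr V' tau \<longleftrightarrow>
     locally_finite_quiver V arr \<and> V' \<subseteq> V \<and> tau ` V' \<subseteq> V \<and> inj_on tau V' \<and>
     (\<forall>X\<in>V. \<forall>Y\<in>V'. arr X Y = arr (tau Y) X)"

definition stable_translation_quiver ::
  "'v set \<Rightarrow> ('v \<Rightarrow> 'v \<Rightarrow> nat) \<Rightarrow> ('v \<Rightarrow> 'v) \<Rightarrow> bool" where
  "stable_translation_quiver V arr tau \<longleftrightarrow>
     translation_quiver V arr V tau \<and> bij_betw tau V V"

text \<open>Vertices of the polygon are labelled 1..N with N = nm+2; labels are taken
  modulo N via red.\<close>

definition red :: "nat \<Rightarrow> nat \<Rightarrow> int \<Rightarrow> int" where
  "red n m k = (k - 1) mod int (n * m + 2) + 1"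

text \<open>A diagonal (i,j) = (j,i) is the set {i,j}. An m-diagonal with i < j cuts the
  polygon into the polygon on vertices i..j (j-i+1 vertices) and the one on the remaining
  vertices together with i,j (N-(j-i)+1 vertices); it is required that these are an
  (mk+2)-gon and an (m(n-k)+2)-gon for some 1 <= k <= n-1.\<close>

definition is_m_diagonal :: "nat \<Rightarrow> nat \<Rightarrow> int set \<Rightarrow> bool" where
  "is_m_diagonal n m D \<longleftrightarrow>
     (\<exists>i j k. D = {i, j} \<and> 1 \<le> i \<and> i < j \<and> j \<le> int (n * m + 2) \<and>
        1 \<le> k \<and> k \<le> int n - 1 \<and>
        j - i + 1 = int m * k + 2 \<and>
        int (n * m + 2) - (j - i) + 1 = int m * (int n - k) + 2)"

definition m_diagonals :: "nat \<Rightarrow> nat \<Rightarrow> int set set" where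
  "m_diagonals n m = {D. is_m_diagonal n m D}"

definition gamma_arr :: "nat \<Rightarrow> nat \<Rightarrow> int set \<Rightarrow> int set \<Rightarrow> nat" where
  "gamma_arr n m D D' =
     (if is_m_diagonal n m D \<and> is_m_diagonal n m D' \<and>
         (\<exists>i j. D = {i, j} \<and> D' = {i, red n m (j + int m)})
      then 1 else 0)"

definition tau_m :: "nat \<Rightarrow> nat \<Rightarrow> int set \<Rightarrow> int set" where
  "tau_m n m D = (\<lambda>x. red n m (x - int m)) ` D"

end

theory Submission
  imports Defs
begin

lemma red_unf: "red n m k = (k - 1) mod int (n*m+2) + 1"
  by (simp add: red_def)

lemma red_range: "1 \<le> red n m x \<and> red n m x \<le> int (n*m+2)"
proof -
  have p: "int (n*m+2) > 0" by (simp only: of_nat_0_less_iff)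
  show ?thesis unfolding red_unf using pos_mod_sign[OF p, of "x-1"] pos_mod_bound[OF p, of "x-1"]
    by linarith
qed

lemma red_id: "1 \<le> x \<Longrightarrow> x \<le> int (n*m+2) \<Longrightarrow> red n m x = x"
  unfolding red_unf by (subst mod_pos_pos_trivial) auto

lemma red_add: "red n m (red n m x + t) = red n m (x + t)"
proof -
  have "((x - 1) mod int (n*m+2) + t) mod int (n*m+2) = (x - 1 + t) mod int (n*m+2)"
    by (rule mod_add_left_eq)
  thus ?thesis unfolding red_unf by (simp add: algebra_simps)
qed

lemma red_sub: "red n m (red n m x - t) = red n m (x - t)"
  using red_add[of n m x "- t"] by simp

lemma red_diff: "(red n m y - red n m x) mod int (n*m+2) = (y - x) mod int (n*m+2)"
proof -
  have "((y - 1) mod int (n*m+2) - (x - 1) mod int (n*m+2)) mod int (n*m+2) = (y - 1 - (x - 1)) mod int (n*m+2)"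
    by (rule mod_diff_eq)
  thus ?thesis unfolding red_unf by simp
qed

lemma diag_range:
  assumes "is_m_diagonal n m D" "x \<in> D" shows "1 \<le> x \<and> x \<le> int (n*m+2)"
proof -
  obtain i j where h: "D = {i, j}" "1 \<le> i" "i < j" "j \<le> int (n * m + 2)"
    using assms(1) unfolding is_m_diagonal_def by blast
  have "x = i \<or> x = j" using h assms(2) by blast
  thus ?thesis using h(2,3,4) by auto
qed

lemma diag_iff:
  assumes "1 \<le> m" "2 \<le> n"
  shows "is_m_diagonal n m D \<longleftrightarrow> (\<exists>i j. D = {i,j} \<and> 1 \<le> i \<and> i \<le> int (n*m+2) \<and>
     1 \<le> j \<and> j \<le> int (n*m+2) \<and>
     (\<exists>k. 1 \<le> k \<and> k \<le> int n - 1 \<and> (j - i) mod int (n*m+2) = int m * k + 1))"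
    (is "?L \<longleftrightarrow> ?R")
proof
  assume ?L
  then obtain i j k where h: "D = {i, j}" "1 \<le> i" "i < j" "j \<le> int (n * m + 2)"
        "1 \<le> k" "k \<le> int n - 1" "j - i + 1 = int m * k + 2"
    unfolding is_m_diagonal_def by blast
  have "int m * k \<le> int m * (int n - 1)" using h by (simp add: mult_left_mono)
  hence "j - i < int (n*m+2)" using h by (simp add: algebra_simps)
  hence "(j - i) mod int (n*m+2) = j - i" using h by (simp add: mod_pos_pos_trivial)
  thus ?R using h by (intro exI[of _ i] exI[of _ j]) auto
next
  assume ?R
  then obtain i j k where h: "D = {i,j}" "1 \<le> i" "i \<le> int (n*m+2)"
     "1 \<le> j" "j \<le> int (n*m+2)" "1 \<le> k" "k \<le> int n - 1"
     "(j - i) mod int (n*m+2) = int m * k + 1" by blast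
  have "1 * 1 \<le> int m * k" using h assms by (intro mult_mono) auto
  hence mk: "int m * k \<ge> 1" by simp
  have mk2: "int m * k \<le> int m * (int n - 1)" using h by (simp add: mult_left_mono)
  have NN: "int (n*m+2) = int m * (int n - k) + int m * k + 2"
    by (simp add: algebra_simps)
  consider "i < j" | "j < i" | "i = j" by linarith
  then show ?L
  proof cases
    case 1
    hence "(j - i) mod int (n*m+2) = j - i" using h by (simp add: mod_pos_pos_trivial)
    hence e: "j - i = int m * k + 1" using h by simp
    show ?L unfolding is_m_diagonal_def
      apply (rule exI[of _ i], rule exI[of _ j], rule exI[of _ k])
      using h(2-7) 1 e NN by (intro conjI h(1)) linarith+
  next
    case 2
    have "(j - i) mod int (n*m+2) = (j - i + int (n*m+2)) mod int (n*m+2)" by simp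
    also have "\<dots> = j - i + int (n*m+2)" using h 2 by (intro mod_pos_pos_trivial) auto
    finally have e: "i - j = int m * (int n - k) + 1" using h NN by linarith
    have kk: "int n - (int n - k) = k" by simp
    show ?L unfolding is_m_diagonal_def kk
      apply (rule exI[of _ j], rule exI[of _ i], rule exI[of _ "int n - k"])
      unfolding kk
      using h(2-7) 2 e NN mk by (intro conjI) (simp add: h(1) insert_commute, linarith+)
  next
    case 3
    then have "int m * k + 1 = 0" using h(8) by simp
    then show ?L using mk by linarith
  qed
qed

lemma rot_diag:
  assumes "1 \<le> m" "2 \<le> n" "is_m_diagonal n m D"
  shows "is_m_diagonal n m ((\<lambda>x. red n m (x + t)) ` D)"
proof -
  obtain i j k where h: "D = {i,j}" "1 \<le> k" "k \<le> int n - 1"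
     "(j - i) mod int (n*m+2) = int m * k + 1"
    using assms(3) unfolding diag_iff[OF assms(1,2)] by blast
  have img: "(\<lambda>x. red n m (x + t)) ` D = {red n m (i + t), red n m (j + t)}" using h(1) by simp
  have d: "(red n m (j + t) - red n m (i + t)) mod int (n*m+2) = int m * k + 1"
    using red_diff[of n m "j + t" "i + t"] h(4) by simp
  show ?thesis
    unfolding diag_iff[OF assms(1,2)] img
    apply (rule exI[of _ "red n m (i + t)"], rule exI[of _ "red n m (j + t)"])
    using h(2,3) d red_range[of n m "i + t"] red_range[of n m "j + t"] by (intro conjI exI[of _ k] refl) auto
qed

lemma tau_diag:
  assumes "1 \<le> m" "2 \<le> n" "is_m_diagonal n m D"
  shows "is_m_diagonal n m (tau_m n m D)"
  using rot_diag[OF assms, of "- int m"] unfolding tau_m_def by simp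

lemma tau_inv:
  assumes "is_m_diagonal n m D"
  shows "(\<lambda>x. red n m (x + int m)) ` tau_m n m D = D"
proof -
  have "(\<lambda>x. red n m (x + int m)) ` tau_m n m D = (\<lambda>x. x) ` D"
    unfolding tau_m_def image_image
    by (rule image_cong) (auto simp: red_add red_sub red_id dest: diag_range[OF assms])
  thus ?thesis by simp
qed

lemma tau_inv2:
  assumes "is_m_diagonal n m D"
  shows "tau_m n m ((\<lambda>x. red n m (x + int m)) ` D) = D"
proof -
  have "tau_m n m ((\<lambda>x. red n m (x + int m)) ` D) = (\<lambda>x. x) ` D"
    unfolding tau_m_def image_image
    by (rule image_cong) (auto simp: red_add red_sub red_id dest: diag_range[OF assms])
  thus ?thesis by simp
qed

theorem proposition2p2:
  fixes m n :: nat
  assumes "1 \<le> m" and "2 \<le> n"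
  shows "stable_translation_quiver (m_diagonals n m) (gamma_arr n m) (tau_m n m)"
proof -
  let ?V = "m_diagonals n m"
  let ?s = "\<lambda>D. (\<lambda>x. red n m (x + int m)) ` D"
  have finV: "finite ?V"
  proof (rule finite_subset)
    show "?V \<subseteq> Pow {1..int (n*m+2)}"
      unfolding m_diagonals_def using diag_range by fastforce
  qed simp
  have bij: "bij_betw (tau_m n m) ?V ?V"
    apply (rule bij_betw_byWitness[where f'="?s"])
    using tau_inv tau_inv2 tau_diag[OF assms] rot_diag[OF assms]
    unfolding m_diagonals_def by auto
  have key: "(\<exists>i j. X = {i, j} \<and> Y = {i, red n m (j + int m)}) \<longleftrightarrow>
             (\<exists>a b. tau_m n m Y = {a, b} \<and> X = {a, red n m (b + int m)})"
    if X: "is_m_diagonal n m X" and Y: "is_m_diagonal n m Y" for X Y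
  proof
    assume "\<exists>i j. X = {i, j} \<and> Y = {i, red n m (j + int m)}"
    then obtain i j where e: "X = {i, j}" "Y = {i, red n m (j + int m)}" by blast
    have r: "1 \<le> i \<and> i \<le> int (n*m+2)" "1 \<le> j \<and> j \<le> int (n*m+2)"
      using diag_range[OF X] e by auto
    have "tau_m n m Y = {j, red n m (i - int m)}"
      unfolding e tau_m_def using r
      by (auto simp: red_add red_sub red_id simp flip: diff_conv_add_uminus)
    moreover have "X = {j, red n m (red n m (i - int m) + int m)}"
      using r e by (auto simp: red_add red_sub red_id)
    ultimately show "\<exists>a b. tau_m n m Y = {a, b} \<and> X = {a, red n m (b + int m)}" by blast
  next
    assume "\<exists>a b. tau_m n m Y = {a, b} \<and> X = {a, red n m (b + int m)}"
    then obtain a b where e: "tau_m n m Y = {a, b}" "X = {a, red n m (b + int m)}" by blast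
    have r: "1 \<le> a \<and> a \<le> int (n*m+2)"
      using diag_range[OF tau_diag[OF assms Y]] e by auto
    have "Y = ?s (tau_m n m Y)" using tau_inv[OF Y] by simp
    also have "\<dots> = {red n m (b + int m), red n m (a + int m)}"
      using e by (simp add: insert_commute)
    finally have "Y = {red n m (b + int m), red n m (a + int m)}" .
    moreover have "X = {red n m (b + int m), a}" using e by auto
    ultimately show "\<exists>i j. X = {i, j} \<and> Y = {i, red n m (j + int m)}" by metis
  qed
  have lf: "locally_finite_quiver ?V (gamma_arr n m)"
    unfolding locally_finite_quiver_def
  proof (intro conjI allI impI ballI)
    fix x y assume "gamma_arr n m x y > 0"
    thus "x \<in> ?V" "y \<in> ?V" unfolding gamma_arr_def m_diagonals_def
      by (auto split: if_splits)
  next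
    fix x
    have "{y. gamma_arr n m x y > 0} \<subseteq> ?V" "{y. gamma_arr n m y x > 0} \<subseteq> ?V"
      unfolding gamma_arr_def m_diagonals_def by (auto split: if_splits)
    thus "finite {y. gamma_arr n m x y > 0}" "finite {y. gamma_arr n m y x > 0}"
      using finV finite_subset by blast+
  qed
  have arr: "\<forall>X\<in>?V. \<forall>Y\<in>?V. gamma_arr n m X Y = gamma_arr n m (tau_m n m Y) X"
  proof (intro ballI)
    fix X Y assume "X \<in> ?V" "Y \<in> ?V"
    hence X: "is_m_diagonal n m X" and Y: "is_m_diagonal n m Y"
      unfolding m_diagonals_def by auto
    show "gamma_arr n m X Y = gamma_arr n m (tau_m n m Y) X"
      unfolding gamma_arr_def using key[OF X Y] X Y tau_diag[OF assms Y] by simp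
  qed
  show ?thesis
    unfolding stable_translation_quiver_def translation_quiver_def
    using lf bij arr bij_betw_imp_inj_on[OF bij] bij_betw_imp_surj_on[OF bij] by auto
qed

end
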